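(* The LCM matrix $[S]$ is invertible for every finite GCD closed $\wedge$-tree set $S$ of positive integers.
   Context: $S$ is GCD closed if $\gcd(x,y)\in S$ for all $x,y\in S$. A set $S$ is a $\wedge$-tree set if the Hasse diagram of its meet closure (here, since $S$ is GCD closed, of $(S,\mid)$ itself) is a tree. The LCM matrix $[S]$ of $S=\{x_1,\dots,x_n\}$ has $(i,j)$ entry $\mathrm{lcm}(x_i,x_j)$. *)

theory Defs
  imports Main "Jordan_Normal_Form.Matrix" "Jordan_Normal_Form.Determinant"
begin

definition gcd_closed :: "nat set \<Rightarrow> bool" where
  "gcd_closed S \<longleftrightarrow> (\<forall>x\<in>S. \<forall>y\<in>S. gcd x y \<in> S)"

definition meet_closure :: "nat set \<Rightarrow> nat set" where
  "meet_closure S = \<Inter>{T. S \<subseteq> T \<and> gcd_closed T}"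

definition covers :: "nat set \<Rightarrow> nat \<Rightarrow> nat \<Rightarrow> bool" where
  "covers S x y \<longleftrightarrow> x \<in> S \<and> y \<in> S \<and> x \<noteq> y \<and> x dvd y \<and>
     \<not> (\<exists>z\<in>S. z \<noteq> x \<and> z \<noteq> y \<and> x dvd z \<and> z dvd y)"

definition hasse_adj :: "nat set \<Rightarrow> nat \<Rightarrow> nat \<Rightarrow> bool" where
  "hasse_adj S x y \<longleftrightarrow> covers S x y \<or> covers S y x"

definition hasse_connected :: "nat set \<Rightarrow> bool" where
  "hasse_connected S \<longleftrightarrow> (\<forall>x\<in>S. \<forall>y\<in>S. (hasse_adj S)\<^sup>*\<^sup>* x y)"

definition hasse_has_cycle :: "nat set \<Rightarrow> bool" where
  "hasse_has_cycle S \<longleftrightarrow> (\<exists>vs. length vs \<ge> 3 \<and> distinct vs \<and>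
     (\<forall>i < length vs. hasse_adj S (vs ! i) (vs ! ((i + 1) mod length vs))))"

definition hasse_is_tree :: "nat set \<Rightarrow> bool" where
  "hasse_is_tree S \<longleftrightarrow> hasse_connected S \<and> \<not> hasse_has_cycle S"

definition wedge_tree_set :: "nat set \<Rightarrow> bool" where
  "wedge_tree_set S \<longleftrightarrow> hasse_is_tree (meet_closure S)"

definition lcm_matrix :: "nat set \<Rightarrow> real mat" where
  "lcm_matrix S = (let xs = sorted_list_of_set S; n = length xs in
     mat n n (\<lambda>(i, j). real (lcm (xs ! i) (xs ! j))))"

end

theory Submission
  imports Defs
begin


lemma meet_closure_id: "gcd_closed S \<Longrightarrow> meet_closure S = S"
  unfolding meet_closure_def by blast

lemma lower_cover_exists:
  assumes fin: "finite S" and pos: "\<forall>x\<in>S. x > 0"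
    and y: "y \<in> S" and z: "z \<in> S" "z dvd y" "z \<noteq> y"
  shows "\<exists>c. covers S c y \<and> z dvd c"
proof -
  define W where "W = {w\<in>S. z dvd w \<and> w dvd y \<and> w \<noteq> y}"
  have zW: "z \<in> W" using z by (auto simp: W_def)
  have finW: "finite W" using fin by (auto simp: W_def)
  define c where "c = Max W"
  have cW: "c \<in> W" using Max_in finW zW unfolding c_def by blast
  have nz: "\<not> (\<exists>u\<in>S. u \<noteq> c \<and> u \<noteq> y \<and> c dvd u \<and> u dvd y)"
  proof
    assume "\<exists>u\<in>S. u \<noteq> c \<and> u \<noteq> y \<and> c dvd u \<and> u dvd y"
    then obtain u where u: "u \<in> S" "u \<noteq> c" "u \<noteq> y" "c dvd u" "u dvd y" by blast
    have "u \<in> W" using u cW by (auto simp: W_def intro: dvd_trans)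
    hence "u \<le> c" using finW unfolding c_def by simp
    moreover have "c \<le> u" using u pos by (auto intro: dvd_imp_le)
    ultimately show False using u by simp
  qed
  have "covers S c y" unfolding covers_def using cW y nz by (auto simp: W_def)
  thus ?thesis using cW by (auto simp: W_def)
qed

lemma chain_exists:
  assumes fin: "finite S" and pos: "\<forall>x\<in>S. x > 0" and m: "m \<in> S"
  shows "a \<in> S \<Longrightarrow> m dvd a \<Longrightarrow> \<exists>cs. cs \<noteq> [] \<and> hd cs = m \<and> last cs = a \<and>
     successively (covers S) cs \<and> sorted_wrt (<) cs \<and> (\<forall>z\<in>set cs. m dvd z \<and> z dvd a \<and> z \<in> S)"
proof (induction a rule: less_induct)
  case (less a)
  show ?case
  proof (cases "a = m")
    case True
    then show ?thesis using m by (intro exI[of _ "[m]"]) auto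
  next
    case False
    obtain w where w: "covers S w a" "m dvd w"
      using lower_cover_exists[OF fin pos less.prems(1) m less.prems(2) False[symmetric]] by blast
    have apos: "a > 0" using pos less.prems by auto
    have wd: "w dvd a" "w \<noteq> a" "w \<in> S" using w by (auto simp: covers_def)
    have wlt: "w < a" using wd apos dvd_imp_le by (metis le_neq_implies_less)
    obtain cs where cs: "cs \<noteq> []" "hd cs = m" "last cs = w" "successively (covers S) cs"
      "sorted_wrt (<) cs" "\<forall>z\<in>set cs. m dvd z \<and> z dvd w \<and> z \<in> S"
      using less.IH[OF wlt wd(3) w(2)] by blast
    have lt: "\<forall>z\<in>set cs. z < a"
    proof
      fix z assume "z \<in> set cs"
      hence "z dvd w" using cs by auto
      hence "z \<le> w" using wd pos dvd_imp_le by blast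
      thus "z < a" using wlt by simp
    qed
    show ?thesis
      apply (intro exI[of _ "cs @ [a]"])
      using cs lt w less.prems wd by (auto simp: successively_append_iff sorted_wrt_append
          intro: dvd_trans)
  qed
qed

lemma cyc_nth:
  assumes "successively R vs" "R (last vs) (hd vs)" "vs \<noteq> []"
  shows "\<forall>i<length vs. R (vs!i) (vs!((i+1) mod length vs))"
proof (intro allI impI)
  fix i assume i: "i < length vs"
  show "R (vs!i) (vs!((i+1) mod length vs))"
  proof (cases "Suc i < length vs")
    case True
    then show ?thesis using assms(1) successively_nth by fastforce
  next
    case False
    hence si: "Suc i = length vs" using i by auto
    hence "i = length vs - 1" "(i+1) mod length vs = 0" by auto
    then show ?thesis using assms(2,3) by (simp add: last_conv_nth hd_conv_nth)
  qed
qed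

lemma two_covers_cycle:
  assumes gc: "gcd_closed S" and fin: "finite S" and pos: "\<forall>x\<in>S. x > 0"
    and ca: "covers S a y" and cb: "covers S b y" and ab: "a \<noteq> b"
  shows "hasse_has_cycle S"
proof -
  define m where "m = gcd a b"
  have aS: "a \<in> S" and bS: "b \<in> S" using ca cb by (auto simp: covers_def)
  have mS: "m \<in> S" using gc aS bS unfolding gcd_closed_def m_def by blast
  have na: "\<not> (\<exists>z\<in>S. z \<noteq> a \<and> z \<noteq> y \<and> a dvd z \<and> z dvd y)"
    and nb: "\<not> (\<exists>z\<in>S. z \<noteq> b \<and> z \<noteq> y \<and> b dvd z \<and> z dvd y)"
    and ayd: "a \<noteq> y" "a dvd y" and byd: "b \<noteq> y" "b dvd y"
    using ca cb by (simp_all add: covers_def)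
  have ma: "m \<noteq> a"
  proof
    assume "m = a"
    hence "a dvd b" unfolding m_def by (metis gcd_dvd2)
    thus False using na bS ab byd by metis
  qed
  have mb: "m \<noteq> b"
  proof
    assume "m = b"
    hence "b dvd a" unfolding m_def by (metis gcd_dvd1)
    thus False using nb aS ab ayd by metis
  qed
  obtain A where A: "A \<noteq> []" "hd A = m" "last A = a" "successively (covers S) A"
      "sorted_wrt (<) A" "\<forall>z\<in>set A. m dvd z \<and> z dvd a \<and> z \<in> S"
    using chain_exists[OF fin pos mS aS] unfolding m_def by auto
  obtain B where B: "B \<noteq> []" "hd B = m" "last B = b" "successively (covers S) B"
      "sorted_wrt (<) B" "\<forall>z\<in>set B. m dvd z \<and> z dvd b \<and> z \<in> S"
    using chain_exists[OF fin pos mS bS] unfolding m_def by auto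
  obtain B' where BB: "B = m # B'" using B by (cases B) auto
  have B'ne: "B' \<noteq> []" using BB B mb by auto
  define vs where "vs = [y] @ rev A @ B'"
  have ya: "y \<noteq> a" "a dvd y" using ca by (auto simp: covers_def)
  have yb: "y \<noteq> b" "b dvd y" using cb by (auto simp: covers_def)
  have yA: "y \<notin> set A"
  proof
    assume "y \<in> set A" hence "y dvd a" using A by auto
    thus False using ya dvd_antisym by blast
  qed
  have yB: "y \<notin> set B'"
  proof
    assume "y \<in> set B'" hence "y dvd b" using B BB by auto
    thus False using yb dvd_antisym by blast
  qed
  have mlt: "\<forall>z\<in>set B'. m < z" using B(5) BB by auto
  have disj: "set A \<inter> set B' = {}"
  proof (rule ccontr)
    assume "set A \<inter> set B' \<noteq> {}"
    then obtain z where z: "z \<in> set A" "z \<in> set B'" by blast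
    hence "z dvd a" "z dvd b" "m dvd z" using A B BB by auto
    hence "z dvd m" unfolding m_def by simp
    hence "z = m" using \<open>m dvd z\<close> dvd_antisym by blast
    thus False using mlt z by auto
  qed
  have dA: "distinct A" using A(5) by (simp add: strict_sorted_iff)
  have dB: "distinct B'" using B(5) BB by (simp add: strict_sorted_iff)
  have dist: "distinct vs" unfolding vs_def using dA dB yA yB disj by auto
  have "length A \<ge> 1" "length B' \<ge> 1" using A(1) B'ne by (simp_all add: Suc_leI)
  hence len: "length vs \<ge> 3" unfolding vs_def by simp
  have adjsym: "\<And>u v. hasse_adj S u v = hasse_adj S v u" unfolding hasse_adj_def by blast
  have "successively (\<lambda>x y. hasse_adj S y x) A"
    by (rule successively_mono[OF A(4)]) (simp add: hasse_adj_def)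
  hence sA: "successively (hasse_adj S) (rev A)" by simp
  have sB0: "covers S m (hd B') \<and> successively (covers S) B'"
    using B(4) BB B'ne by (simp add: successively_Cons)
  have sB: "successively (hasse_adj S) B'"
    by (rule successively_mono[of "covers S"]) (use sB0 in \<open>simp_all add: hasse_adj_def\<close>)
  have j1: "hasse_adj S y a" using ca by (simp add: hasse_adj_def)
  have j2: "hasse_adj S m (hd B')" using sB0 by (simp add: hasse_adj_def)
  have s1: "successively (hasse_adj S) (rev A @ B')"
    using sA sB j2 A(1,2) B'ne by (simp add: successively_append_iff last_rev)
  have h1: "hd (rev A @ B') = a" using A(1,3) by (simp add: hd_rev)
  have succ: "successively (hasse_adj S) vs"
    unfolding vs_def using s1 j1 h1 by (simp add: successively_Cons)
  have lastB': "last B' = b" using B(3) BB B'ne by simp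
  have cl: "hasse_adj S (last vs) (hd vs)"
    unfolding vs_def using lastB' B'ne cb by (simp add: hasse_adj_def)
  show ?thesis unfolding hasse_has_cycle_def
    using cyc_nth[OF succ cl] dist len unfolding vs_def by (intro exI[of _ vs]) (auto simp: vs_def)
qed



lemma top_exists:
  assumes fin: "finite S" and pos: "\<forall>x\<in>S. x > 0" and gc: "gcd_closed S"
    and nc: "\<not> hasse_has_cycle S" and y: "y \<in> S"
    and ne: "{z\<in>S. z dvd y \<and> z \<noteq> y} \<noteq> {}"
  shows "Max {z\<in>S. z dvd y \<and> z \<noteq> y} \<in> {z\<in>S. z dvd y \<and> z \<noteq> y}"
    "\<forall>z\<in>{z\<in>S. z dvd y \<and> z \<noteq> y}. z dvd Max {z\<in>S. z dvd y \<and> z \<noteq> y}"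
proof -
  let ?P = "{z\<in>S. z dvd y \<and> z \<noteq> y}"
  define p where "p = Max ?P"
  have finP: "finite ?P" using fin by auto
  have pP: "p \<in> ?P" using Max_in[OF finP ne] unfolding p_def .
  then show "Max ?P \<in> ?P" unfolding p_def .
  obtain c where c: "covers S c y" "p dvd c" using lower_cover_exists[OF fin pos y] pP by blast
  have "c \<in> ?P" using c by (auto simp: covers_def)
  hence "c \<le> p" using finP unfolding p_def by simp
  moreover have "p \<le> c" using c pos by (auto simp: covers_def intro: dvd_imp_le)
  ultimately have cp: "covers S p y" using c by simp
  show "\<forall>z\<in>?P. z dvd Max ?P"
  proof
    fix z assume z: "z \<in> ?P"
    obtain c' where c': "covers S c' y" "z dvd c'" using lower_cover_exists[OF fin pos y] z by blast
    have "c' = p" using two_covers_cycle[OF gc fin pos c'(1) cp] nc by blast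
    thus "z dvd Max ?P" using c' unfolding p_def by simp
  qed
qed

definition gfun :: "nat set \<Rightarrow> nat \<Rightarrow> real" where
  "gfun S y = (if {z\<in>S. z dvd y \<and> z \<noteq> y} = {} then 1 / real y
      else 1 / real y - 1 / real (Max {z\<in>S. z dvd y \<and> z \<noteq> y}))"

lemma gfun_nonzero:
  assumes fin: "finite S" and pos: "\<forall>x\<in>S. x > 0" and gc: "gcd_closed S"
    and nc: "\<not> hasse_has_cycle S" and y: "y \<in> S"
  shows "gfun S y \<noteq> 0"
proof (cases "{z\<in>S. z dvd y \<and> z \<noteq> y} = {}")
  case True
  then show ?thesis using pos y by (simp add: gfun_def)
next
  case False
  let ?p = "Max {z\<in>S. z dvd y \<and> z \<noteq> y}"
  have "?p \<in> S" "?p \<noteq> y" using top_exists(1)[OF fin pos gc nc y False] by auto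
  hence "?p > 0" "y > 0" "?p \<noteq> y" using pos y by auto
  hence "1 / real y \<noteq> 1 / real ?p" by (simp add: field_simps)
  moreover have "gfun S y = 1 / real y - 1 / real ?p"
    unfolding gfun_def by (simp only: False if_False)
  ultimately show ?thesis by simp
qed

lemma gfun_sum:
  assumes fin: "finite S" and pos: "\<forall>x\<in>S. x > 0" and gc: "gcd_closed S"
    and nc: "\<not> hasse_has_cycle S"
  shows "y \<in> S \<Longrightarrow> (\<Sum>z\<in>{z\<in>S. z dvd y}. gfun S z) = 1 / real y"
proof (induction y rule: less_induct)
  case (less y)
  let ?P = "{z\<in>S. z dvd y \<and> z \<noteq> y}"
  have split: "{z\<in>S. z dvd y} = insert y ?P" using less.prems by auto
  have finP: "finite ?P" using fin by auto
  have sum: "(\<Sum>z\<in>{z\<in>S. z dvd y}. gfun S z) = gfun S y + (\<Sum>z\<in>?P. gfun S z)"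
    unfolding split using finP by (simp add: sum.insert)
  show ?case
  proof (cases "?P = {}")
    case True
    have "gfun S y = 1 / real y" unfolding gfun_def using True by simp
    moreover have "(\<Sum>z\<in>?P. gfun S z) = 0" unfolding True by simp
    ultimately show ?thesis using sum by simp
  next
    case False
    define p where "p = Max ?P"
    have pP: "p \<in> ?P" and all: "\<forall>z\<in>?P. z dvd p"
      using top_exists[OF fin pos gc nc less.prems False] unfolding p_def by auto
    have ypos: "y > 0" using pos less.prems by auto
    have plt: "p < y" using pP ypos by (auto intro: le_neq_implies_less dvd_imp_le)
    have Peq: "?P = {z\<in>S. z dvd p}"
    proof
      show "?P \<subseteq> {z\<in>S. z dvd p}" using all by auto
      show "{z\<in>S. z dvd p} \<subseteq> ?P"
      proof
        fix z assume z: "z \<in> {z\<in>S. z dvd p}"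
        have "z \<le> p" using z pP pos by (auto intro: dvd_imp_le)
        thus "z \<in> ?P" using z pP plt by (auto intro: dvd_trans)
      qed
    qed
    have "(\<Sum>z\<in>?P. gfun S z) = 1 / real p"
      unfolding Peq using less.IH[OF plt] pP by auto
    moreover have "gfun S y = 1 / real y - 1 / real p"
      unfolding gfun_def p_def by (simp only: False if_False)
    ultimately show ?thesis using sum by simp
  qed
qed



lemma sum_nth_distinct:
  assumes "distinct xs"
  shows "(\<Sum>k\<in>{0..<length xs}. F (xs!k)) = (\<Sum>z\<in>set xs. F z)"
proof -
  have "inj_on (nth xs) {0..<length xs}" using assms by (auto simp: inj_on_def nth_eq_iff_index_eq)
  moreover have "nth xs ` {0..<length xs} = set xs" by (auto simp: set_conv_nth)
  ultimately show ?thesis using sum.reindex[of "nth xs" "{0..<length xs}" F] by simp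
qed

lemma real_aux: "(a::real) * b = g * l \<Longrightarrow> g \<noteq> 0 \<Longrightarrow> a * b * (1 / g) = l"
  by (simp add: field_simps)

lemma main:
  assumes fin: "finite S" and pos: "\<forall>x\<in>S. x > 0" and gc: "gcd_closed S"
    and nc: "\<not> hasse_has_cycle S"
  shows "invertible_mat (lcm_matrix S)"
proof -
  define xs where "xs = sorted_list_of_set S"
  define n where "n = length xs"
  have setxs: "set xs = S" and dxs: "distinct xs" and sxs: "sorted_wrt (<) xs"
    using fin unfolding xs_def by (auto simp: strict_sorted_iff)
  have xin: "\<And>i. i < n \<Longrightarrow> xs!i \<in> S" using setxs n_def nth_mem by blast
  have xpos: "\<And>i. i < n \<Longrightarrow> xs!i > 0" using xin pos by blast
  have ord: "\<And>i k. i < n \<Longrightarrow> k < n \<Longrightarrow> xs!k dvd xs!i \<Longrightarrow> k \<le> i"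
  proof (rule ccontr)
    fix i k assume a: "i < n" "k < n" "xs!k dvd xs!i" "\<not> k \<le> i"
    hence "xs!i < xs!k" using sorted_wrt_nth_less[OF sxs, of i k] n_def by simp
    moreover have "xs!k \<le> xs!i" using a xpos dvd_imp_le by blast
    ultimately show False by simp
  qed
  define C where "C = mat n n (\<lambda>(i,k). if xs!k dvd xs!i then real (xs!i) * gfun S (xs!k) else 0)"
  define R where "R = mat n n (\<lambda>(k,j). if xs!k dvd xs!j then real (xs!j) else 0)"
  have Cc: "C \<in> carrier_mat n n" and Rc: "R \<in> carrier_mat n n" unfolding C_def R_def by auto
  have L: "lcm_matrix S = mat n n (\<lambda>(i,j). real (lcm (xs ! i) (xs ! j)))"
    unfolding lcm_matrix_def xs_def n_def Let_def by simp
  have eq: "lcm_matrix S = C * R"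
  proof (rule eq_matI)
    show "dim_row (lcm_matrix S) = dim_row (C * R)" "dim_col (lcm_matrix S) = dim_col (C * R)"
      unfolding L C_def R_def by auto
    fix i j assume ij: "i < dim_row (C * R)" "j < dim_col (C * R)"
    hence i: "i < n" and j: "j < n" unfolding C_def R_def by auto
    let ?g = "gcd (xs!i) (xs!j)"
    have gS: "?g \<in> S" using gc xin i j unfolding gcd_closed_def by blast
    have gpos: "?g > 0" using gS pos by auto
    define F where "F = (\<lambda>z. if z dvd ?g then real (xs!i) * real (xs!j) * gfun S z else 0)"
    have "(C * R) $$ (i,j) = row C i \<bullet> col R j" using i j Cc Rc by simp
    also have "\<dots> = (\<Sum>k\<in>{0..<n}. C $$ (i,k) * R $$ (k,j))"
      unfolding scalar_prod_def using i j Cc Rc by simp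
    also have "\<dots> = (\<Sum>k\<in>{0..<n}. F (xs!k))"
    proof (rule sum.cong[OF refl])
      fix k assume "k \<in> {0..<n}"
      hence k: "k < n" by simp
      have c: "C $$ (i,k) = (if xs!k dvd xs!i then real (xs!i) * gfun S (xs!k) else 0)"
        using i k by (simp add: C_def)
      have r: "R $$ (k,j) = (if xs!k dvd xs!j then real (xs!j) else 0)"
        using j k by (simp add: R_def)
      show "C $$ (i,k) * R $$ (k,j) = F (xs!k)"
        unfolding c r F_def by (cases "xs!k dvd xs!i"; cases "xs!k dvd xs!j") simp_all
    qed
    also have "\<dots> = (\<Sum>z\<in>S. F z)"
      using sum_nth_distinct[OF dxs, of F] unfolding n_def[symmetric] setxs .
    also have "\<dots> = (\<Sum>z\<in>{z\<in>S. z dvd ?g}. real (xs!i) * real (xs!j) * gfun S z)"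
      unfolding F_def by (rule sum.inter_filter[symmetric, OF fin])
    also have "\<dots> = real (xs!i) * real (xs!j) * (\<Sum>z\<in>{z\<in>S. z dvd ?g}. gfun S z)"
      by (rule sum_distrib_left[symmetric])
    also have "\<dots> = real (xs!i) * real (xs!j) * (1 / real ?g)"
      using gfun_sum[OF fin pos gc nc gS] by (rule arg_cong)
    also have "\<dots> = real (lcm (xs!i) (xs!j))"
    proof -
      have "xs!i * xs!j = ?g * lcm (xs!i) (xs!j)" by (rule prod_gcd_lcm_nat)
      hence "real (xs!i * xs!j) = real (?g * lcm (xs!i) (xs!j))" by (rule arg_cong)
      hence e: "real (xs!i) * real (xs!j) = real ?g * real (lcm (xs!i) (xs!j))"
        unfolding of_nat_mult .
      have "real ?g \<noteq> 0" using gpos by simp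
      from real_aux[OF e this] show ?thesis .
    qed
    finally show "lcm_matrix S $$ (i,j) = (C * R) $$ (i,j)" unfolding L using i j by simp
  qed
  have dC: "det C = prod_list (diag_mat C)"
  proof (rule det_lower_triangular[OF _ Cc])
    fix i j assume ij: "i < j" "j < n"
    hence "\<not> xs!j dvd xs!i" using ord[of i j] by auto
    thus "C $$ (i,j) = 0" using ij by (simp add: C_def)
  qed
  have dR: "det R = prod_list (diag_mat R)"
  proof (rule det_upper_triangular[OF _ Rc])
    show "upper_triangular R" unfolding upper_triangular_def
    proof (intro allI impI)
      fix i j assume ij: "i < dim_row R" "j < i"
      hence i: "i < n" using Rc by simp
      hence "\<not> xs!i dvd xs!j" using ord[of j i] ij by auto
      thus "R $$ (i,j) = 0" using ij i by (simp add: R_def)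
    qed
  qed
  have cd: "\<And>i. i < n \<Longrightarrow> C $$ (i,i) \<noteq> 0"
  proof -
    fix i assume i: "i < n"
    have "real (xs!i) \<noteq> 0" using xpos[OF i] by simp
    moreover have "gfun S (xs!i) \<noteq> 0" using gfun_nonzero[OF fin pos gc nc xin[OF i]] .
    ultimately show "C $$ (i,i) \<noteq> 0" using i by (simp add: C_def)
  qed
  have "det C \<noteq> 0" unfolding dC using Cc cd
    by (auto simp: prod_list_zero_iff diag_mat_def)
  moreover have "det R \<noteq> 0"
  proof -
    have rd: "\<And>i. i < n \<Longrightarrow> R $$ (i,i) \<noteq> 0"
    proof -
      fix i assume i: "i < n"
      have "real (xs!i) \<noteq> 0" using xpos[OF i] by simp
      thus "R $$ (i,i) \<noteq> 0" using i by (simp add: R_def)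
    qed
    show ?thesis unfolding dR using Rc rd by (auto simp: prod_list_zero_iff diag_mat_def)
  qed
  ultimately have "det (C * R) \<noteq> 0" using det_mult[OF Cc Rc] by simp
  hence dL: "det (lcm_matrix S) \<noteq> 0" unfolding eq .
  have Lc: "lcm_matrix S \<in> carrier_mat n n" unfolding L by simp
  have U: "lcm_matrix S \<in> Units (ring_mat TYPE(real) n ())"
    by (rule det_non_zero_imp_unit[OF Lc dL])
  have "\<exists>B. B \<in> carrier_mat n n \<and> B * lcm_matrix S = 1\<^sub>m n \<and> lcm_matrix S * B = 1\<^sub>m n"
    using U unfolding Units_def ring_mat_def by (simp; blast)
  then obtain B where B: "B \<in> carrier_mat n n" "B * lcm_matrix S = 1\<^sub>m n" "lcm_matrix S * B = 1\<^sub>m n"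
    by blast
  show ?thesis unfolding invertible_mat_def inverts_mat_def square_mat.simps
    using B Lc by auto
qed


theorem corollary4p6:
  fixes S :: "nat set"
  assumes "finite S" and "\<forall>x\<in>S. x > 0" and "gcd_closed S" and "wedge_tree_set S"
  shows "invertible_mat (lcm_matrix S)"
proof -
  have "\<not> hasse_has_cycle S" using assms(4) meet_closure_id[OF assms(3)]
    unfolding wedge_tree_set_def hasse_is_tree_def by simp
  thus ?thesis using main[OF assms(1,2,3)] by blast
qed

end
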